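(* Let $\omega\in\mathbb{R}^d$, $N\in\mathbb{N}$, $\rho>0$, $n\ge1$, and let $\Gamma\subset\mathbb{C}$ be finite with $0<\#\Gamma\le n$, such that every $\alpha\in\Gamma$ is $(N,\rho)$-linked to some $\beta\in\Gamma$. Let $\mathcal{E}\subseteq\Gamma$ be an equivalence class for the relation of being $(N,\rho)$-chain-linked. If $\mathcal{E}$ contains no odd $(N,\rho)$-loop, then there is a partition $\mathcal{E}=\Sigma_1\cup\Sigma_2$ such that: (i) if $\beta,\gamma\in\Sigma_1$ then $\beta$ and $\gamma$ are not $(N,\rho)$-linked, and likewise for $\Sigma_2$; (ii) if $\beta,\gamma\in\Sigma_1$ then $\beta$ and $\bar\gamma$ are $(nN,n\rho)$-linked, and likewise for $\Sigma_2$; (iii) if $\beta\in\Sigma_1$ and $\gamma\in\Sigma_2$ then $\beta$ and $\gamma$ are $(nN,n\rho)$-linked.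
   Context: For $k\in\mathbb{Z}^d$, $|k|=\sum_i|k_i|$. Two complex numbers $\alpha,\beta$ are $(N,\rho)$-linked if $|2i\pi\langle k,\omega\rangle-(\alpha-\bar\beta)|<\rho$ for some $k\in\mathbb{Z}^d$ with $|k|\le N$. An $(N,\rho)$-chain in $\Gamma$ of length $r-1$ is a sequence $\alpha_1,\dots,\alpha_r$ in $\Gamma$ with $\alpha_j$ and $\alpha_{j+1}$ $(N,\rho)$-linked for all $j$; $\alpha_1$ and $\alpha_r$ are then $(N,\rho)$-chain-linked. An $(N,\rho)$-loop is such a chain with $\alpha_1=\alpha_r$ (and $r\ge2$); it is odd if its length is odd. Under the stated hypothesis on $\Gamma$, being $(N,\rho)$-chain-linked is an equivalence relation on $\Gamma$. *)

theory Defs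
  imports "HOL-Analysis.Analysis"
begin

definition knorm :: "int ^ 'd \<Rightarrow> int" where
  "knorm k = (\<Sum>i\<in>UNIV. \<bar>k $ i\<bar>)"

definition kdot :: "int ^ 'd \<Rightarrow> real ^ 'd \<Rightarrow> real" where
  "kdot k \<omega> = (\<Sum>i\<in>UNIV. of_int (k $ i) * \<omega> $ i)"

definition linked :: "real ^ 'd \<Rightarrow> nat \<Rightarrow> real \<Rightarrow> complex \<Rightarrow> complex \<Rightarrow> bool" where
  "linked \<omega> N \<rho> \<alpha> \<beta> \<longleftrightarrow>
     (\<exists>k :: int ^ 'd. knorm k \<le> int N \<and>
        cmod (2 * \<i> * complex_of_real pi * complex_of_real (kdot k \<omega>) - (\<alpha> - cnj \<beta>)) < \<rho>)"

text \<open>An (N,rho)-chain in S: a nonempty list alpha_1..alpha_r of elements of S with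
  consecutive entries linked; its length is r - 1.\<close>
definition is_chain :: "real ^ 'd \<Rightarrow> nat \<Rightarrow> real \<Rightarrow> complex set \<Rightarrow> complex list \<Rightarrow> bool" where
  "is_chain \<omega> N \<rho> S xs \<longleftrightarrow> xs \<noteq> [] \<and> set xs \<subseteq> S \<and>
     (\<forall>j. Suc j < length xs \<longrightarrow> linked \<omega> N \<rho> (xs ! j) (xs ! Suc j))"

definition chain_linked :: "real ^ 'd \<Rightarrow> nat \<Rightarrow> real \<Rightarrow> complex set \<Rightarrow> complex \<Rightarrow> complex \<Rightarrow> bool" where
  "chain_linked \<omega> N \<rho> S \<alpha> \<beta> \<longleftrightarrow>
     (\<exists>xs. is_chain \<omega> N \<rho> S xs \<and> hd xs = \<alpha> \<and> last xs = \<beta>)"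

definition has_odd_loop :: "real ^ 'd \<Rightarrow> nat \<Rightarrow> real \<Rightarrow> complex set \<Rightarrow> bool" where
  "has_odd_loop \<omega> N \<rho> S \<longleftrightarrow>
     (\<exists>xs. is_chain \<omega> N \<rho> S xs \<and> length xs \<ge> 2 \<and> hd xs = last xs \<and> odd (length xs - 1))"

end

theory Submission
  imports Defs begin
fun ch :: "real ^ 'd \<Rightarrow> nat \<Rightarrow> real \<Rightarrow> complex set \<Rightarrow> complex list \<Rightarrow> bool" where
  "ch w N r S [] = False"
| "ch w N r S [x] = (x \<in> S)"
| "ch w N r S (x # y # zs) = (x \<in> S \<and> linked w N r x y \<and> ch w N r S (y # zs))"

lemma is_chain_Cons2: "is_chain w N r S (x # y # zs) = (x \<in> S \<and> linked w N r x y \<and> is_chain w N r S (y # zs))"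
proof
  assume a: "is_chain w N r S (x # y # zs)"
  have s: "set (x # y # zs) \<subseteq> S" and l: "\<And>j. Suc j < length (x # y # zs) \<Longrightarrow> linked w N r ((x # y # zs) ! j) ((x # y # zs) ! Suc j)"
    using a unfolding is_chain_def by blast+
  have "linked w N r x y" using l[of 0] by simp
  moreover have "\<And>j. Suc j < length (y # zs) \<Longrightarrow> linked w N r ((y # zs) ! j) ((y # zs) ! Suc j)"
  proof -
    fix j assume "Suc j < length (y # zs)"
    then have "Suc (Suc j) < length (x # y # zs)" by simp
    from l[OF this] show "linked w N r ((y # zs) ! j) ((y # zs) ! Suc j)" by simp
  qed
  ultimately show "x \<in> S \<and> linked w N r x y \<and> is_chain w N r S (y # zs)"
    using s unfolding is_chain_def by simp
next
  assume a: "x \<in> S \<and> linked w N r x y \<and> is_chain w N r S (y # zs)"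
  have s: "set (y # zs) \<subseteq> S" and l: "\<And>j. Suc j < length (y # zs) \<Longrightarrow> linked w N r ((y # zs) ! j) ((y # zs) ! Suc j)"
    using a unfolding is_chain_def by blast+
  have "\<And>j. Suc j < length (x # y # zs) \<Longrightarrow> linked w N r ((x # y # zs) ! j) ((x # y # zs) ! Suc j)"
  proof -
    fix j assume j: "Suc j < length (x # y # zs)"
    show "linked w N r ((x # y # zs) ! j) ((x # y # zs) ! Suc j)"
    proof (cases j)
      case 0 then show ?thesis using a by simp
    next
      case (Suc i) then have "Suc i < length (y # zs)" using j by simp
      from l[OF this] show ?thesis using Suc by simp
    qed
  qed
  then show "is_chain w N r S (x # y # zs)" using s a unfolding is_chain_def by simp
qed

lemma is_chain_ch: "is_chain w N r S xs = ch w N r S xs"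
proof (induction w N r S xs rule: ch.induct)
  case (3 w N r S x y zs)
  then show ?case by (simp only: is_chain_Cons2 ch.simps)
qed (simp_all add: is_chain_def)
lemma linked_sym: assumes "linked w N r a b" shows "linked w N r b a"
proof -
  obtain k where k: "knorm k \<le> int N" "cmod (2 * \<i> * complex_of_real pi * complex_of_real (kdot k w) - (a - cnj b)) < r"
    using assms unfolding linked_def by blast
  have "2 * \<i> * complex_of_real pi * complex_of_real (kdot k w) - (b - cnj a) = - cnj (2 * \<i> * complex_of_real pi * complex_of_real (kdot k w) - (a - cnj b))"
    by (simp add: complex_eq_iff)
  then have "cmod (2 * \<i> * complex_of_real pi * complex_of_real (kdot k w) - (b - cnj a)) = cmod (2 * \<i> * complex_of_real pi * complex_of_real (kdot k w) - (a - cnj b))"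
    by (simp only: complex_mod_cnj norm_minus_cancel)
  then have "cmod (2 * \<i> * complex_of_real pi * complex_of_real (kdot k w) - (b - cnj a)) < r"
    using k(2) by simp
  then show ?thesis using k(1) unfolding linked_def by blast
qed

lemma ch_nonempty: "ch w N r S xs \<Longrightarrow> xs \<noteq> []" by (cases xs) auto

lemma ch_append: "xs \<noteq> [] \<Longrightarrow> ys \<noteq> [] \<Longrightarrow> ch w N r S (xs @ ys) = (ch w N r S xs \<and> ch w N r S ys \<and> linked w N r (last xs) (hd ys))"
proof (induction xs rule: induct_list012)
  case (3 x y zs)
  then show ?case by auto
qed (auto simp: neq_Nil_conv)

lemma ch_rev: "ch w N r S xs \<Longrightarrow> ch w N r S (rev xs)"
proof (induction xs rule: induct_list012)
  case (3 x y zs)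
  have "ch w N r S (rev (y # zs) @ [x])"
    using 3 by (subst ch_append) (auto simp: linked_sym last_rev)
  then show ?case by simp
qed auto

lemma ch_glue: assumes "ch w N r S xs" "ch w N r S ys" "last xs = hd ys"
  shows "\<exists>zs. ch w N r S zs \<and> hd zs = hd xs \<and> last zs = last ys \<and> length zs + 1 = length xs + length ys"
proof -
  obtain y ys' where ys: "ys = y # ys'" using ch_nonempty[OF assms(2)] by (cases ys) auto
  have xne: "xs \<noteq> []" using ch_nonempty[OF assms(1)] .
  show ?thesis
  proof (cases "ys' = []")
    case True
    then show ?thesis using assms ys by (intro exI[of _ xs]) simp
  next
    case False
    then obtain z zs' where z: "ys' = z # zs'" by (cases ys') auto
    have c: "ch w N r S ys'" "linked w N r y z" using assms(2) ys z by simp_all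
    have "ch w N r S (xs @ ys')" using assms(1,3) c False xne ys z by (subst ch_append) auto
    moreover have "hd (xs @ ys') = hd xs" using xne by simp
    moreover have "last (xs @ ys') = last ys" using False ys by simp
    moreover have "length (xs @ ys') + 1 = length xs + length ys" using ys by simp
    ultimately show ?thesis by blast
  qed
qed

lemma knorm_diff: "knorm (a - b) \<le> knorm a + knorm b"
  unfolding knorm_def by (simp add: sum.distrib[symmetric] sum_mono abs_triangle_ineq4)

lemma kdot_diff: "kdot (a - b) w = kdot a w - kdot b w"
  unfolding kdot_def by (simp add: sum_subtractf left_diff_distrib)

lemma knorm0: "knorm 0 = 0" unfolding knorm_def by simp
lemma kdot0: "kdot 0 w = 0" unfolding kdot_def by simp

lemma ch_link: "ch w N r S xs \<Longrightarrow> \<exists>k. knorm k \<le> int ((length xs - 1) * N) \<and>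
   cmod (2 * \<i> * complex_of_real pi * complex_of_real (kdot k w) - (hd xs - (if odd (length xs) then last xs else cnj (last xs)))) \<le> real (length xs - 1) * r"
proof (induction xs rule: induct_list012)
  case (2 x)
  then show ?case by (intro exI[of _ 0]) (simp add: knorm0 kdot0)
next
  case (3 x y zs)
  from 3 obtain k' where k': "knorm k' \<le> int ((length (y # zs) - 1) * N)"
    "cmod (2 * \<i> * complex_of_real pi * complex_of_real (kdot k' w) - (y - (if odd (length (y # zs)) then last (y # zs) else cnj (last (y # zs))))) \<le> real (length (y # zs) - 1) * r"
    by auto
  have "linked w N r x y" using "3.prems" by simp
  then obtain k1 where k1: "knorm k1 \<le> int N" "cmod (2 * \<i> * complex_of_real pi * complex_of_real (kdot k1 w) - (x - cnj y)) < r"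
    unfolding linked_def by blast
  define A where "A = 2 * \<i> * complex_of_real pi * complex_of_real (kdot k1 w) - (x - cnj y)"
  define B where "B = 2 * \<i> * complex_of_real pi * complex_of_real (kdot k' w) - (y - (if odd (length (y # zs)) then last (y # zs) else cnj (last (y # zs))))"
  have g: "cnj (if odd (length (y # zs)) then last (y # zs) else cnj (last (y # zs))) = (if odd (length (x # y # zs)) then last (x # y # zs) else cnj (last (x # y # zs)))"
    by auto
  have eq: "2 * \<i> * complex_of_real pi * complex_of_real (kdot (k1 - k') w) - (hd (x # y # zs) - (if odd (length (x # y # zs)) then last (x # y # zs) else cnj (last (x # y # zs)))) = A + cnj B"
    unfolding A_def B_def kdot_diff g[symmetric] by (simp add: algebra_simps)
  have "cmod (A + cnj B) \<le> cmod A + cmod B" by (metis complex_mod_cnj norm_triangle_ineq)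
  also have "\<dots> \<le> r + real (length (y # zs) - 1) * r" using k1(2) k'(2) unfolding A_def B_def by linarith
  also have "\<dots> = real (length (x # y # zs) - 1) * r" by (simp add: algebra_simps)
  finally have c: "cmod (A + cnj B) \<le> real (length (x # y # zs) - 1) * r" .
  have kn: "knorm (k1 - k') \<le> int ((length (x # y # zs) - 1) * N)"
    using knorm_diff[of k1 k'] k1(1) k'(1) by simp
  show ?case apply (rule exI[of _ "k1 - k'"]) unfolding eq using kn c by blast
qed auto


lemma ch_set: "ch w N r S xs \<Longrightarrow> set xs \<subseteq> S"
  by (induction w N r S xs rule: ch.induct) auto

lemma ch_mono: "ch w N r S xs \<Longrightarrow> set xs \<subseteq> T \<Longrightarrow> ch w N r T xs"
  by (induction w N r S xs rule: ch.induct) auto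

lemma ch_in_E: assumes "ch w N r S xs" "hd xs = a"
  shows "set xs \<subseteq> {b\<in>S. chain_linked w N r S a b}"
  using assms
proof (induction xs rule: rev_induct)
  case Nil then show ?case by simp
next
  case (snoc x xs)
  have xS: "x \<in> S" using ch_set[OF snoc.prems(1)] by simp
  have cl: "chain_linked w N r S a x"
    unfolding chain_linked_def is_chain_ch using snoc.prems by (intro exI[of _ "xs @ [x]"]) simp
  show ?case
  proof (cases "xs = []")
    case True then show ?thesis using xS cl by simp
  next
    case False
    have "ch w N r S xs" using snoc.prems(1) False ch_append[of xs "[x]" w N r S] by auto
    moreover have "hd xs = a" using snoc.prems(2) False by simp
    ultimately have "set xs \<subseteq> {b\<in>S. chain_linked w N r S a b}" using snoc.IH by blast
    then show ?thesis using xS cl by simp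
  qed
qed

lemma ch_distinct: "ch w N r S xs \<Longrightarrow> \<exists>ys. ch w N r S ys \<and> hd ys = hd xs \<and> last ys = last xs \<and> distinct ys"
proof (induction "length xs" arbitrary: xs rule: less_induct)
  case less
  show ?case
  proof (cases "distinct xs")
    case True then show ?thesis using less.prems by blast
  next
    case False
    then obtain a b c u where xs: "xs = a @ [u] @ b @ [u] @ c" using not_distinct_decomp by blast
    have c1: "ch w N r S (u # c)"
      using less.prems ch_append[of "a @ [u] @ b" "u # c" w N r S] xs by auto
    have c2: "ch w N r S (a @ u # c)"
    proof (cases "a = []")
      case True then show ?thesis using c1 by simp
    next
      case False
      have "ch w N r S a \<and> linked w N r (last a) u"
        using less.prems ch_append[of a "u # b @ u # c" w N r S] xs False by auto
      then show ?thesis using c1 False by (subst ch_append) auto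
    qed
    have "length (a @ u # c) < length xs" using xs by simp
    moreover have "hd (a @ u # c) = hd xs" using xs by (cases a) auto
    moreover have "last (a @ u # c) = last xs" using xs by (cases c) auto
    ultimately show ?thesis using less.hyps[OF _ c2] by metis
  qed
qed

theorem lemma13:
  fixes \<omega> :: "real ^ 'd" and N n :: nat and \<rho> :: real
    and \<Gamma> \<E> :: "complex set"
  assumes "\<rho> > 0" and "n \<ge> 1"
    and "finite \<Gamma>" and "0 < card \<Gamma>" and "card \<Gamma> \<le> n"
    and "\<forall>\<alpha>\<in>\<Gamma>. \<exists>\<beta>\<in>\<Gamma>. linked \<omega> N \<rho> \<alpha> \<beta>"
    and "\<exists>\<alpha>\<in>\<Gamma>. \<E> = {\<beta>\<in>\<Gamma>. chain_linked \<omega> N \<rho> \<Gamma> \<alpha> \<beta>}"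
    and "\<not> has_odd_loop \<omega> N \<rho> \<E>"
  shows "\<exists>\<Sigma>1 \<Sigma>2. \<E> = \<Sigma>1 \<union> \<Sigma>2 \<and> \<Sigma>1 \<inter> \<Sigma>2 = {} \<and>
    (\<forall>\<beta>\<in>\<Sigma>1. \<forall>\<gamma>\<in>\<Sigma>1. \<not> linked \<omega> N \<rho> \<beta> \<gamma>) \<and>
    (\<forall>\<beta>\<in>\<Sigma>2. \<forall>\<gamma>\<in>\<Sigma>2. \<not> linked \<omega> N \<rho> \<beta> \<gamma>) \<and>
    (\<forall>\<beta>\<in>\<Sigma>1. \<forall>\<gamma>\<in>\<Sigma>1. linked \<omega> (n * N) (real n * \<rho>) \<beta> (cnj \<gamma>)) \<and>
    (\<forall>\<beta>\<in>\<Sigma>2. \<forall>\<gamma>\<in>\<Sigma>2. linked \<omega> (n * N) (real n * \<rho>) \<beta> (cnj \<gamma>)) \<and>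
    (\<forall>\<beta>\<in>\<Sigma>1. \<forall>\<gamma>\<in>\<Sigma>2. linked \<omega> (n * N) (real n * \<rho>) \<beta> \<gamma>)"
proof -
  obtain a0 where a0: "a0 \<in> \<Gamma>" and E: "\<E> = {\<beta>\<in>\<Gamma>. chain_linked \<omega> N \<rho> \<Gamma> a0 \<beta>}"
    using assms(7) by blast
  let ?ch = "ch \<omega> N \<rho> \<E>"
  have noloop: "even (length xs - 1)" if h: "?ch xs" "2 \<le> length xs" "hd xs = last xs" for xs
    using assms(8) h unfolding has_odd_loop_def is_chain_ch by blast
  have par: "odd (length xs) = odd (length ys)"
    if h: "?ch xs" "?ch ys" "hd xs = hd ys" "last xs = last ys" for xs ys
  proof -
    have "?ch (rev ys)" using ch_rev h(2) .
    moreover have "last xs = hd (rev ys)" using h ch_nonempty[OF h(2)] by (simp add: hd_rev)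
    ultimately obtain zs where zs: "?ch zs" "hd zs = hd xs" "last zs = last (rev ys)"
      "length zs + 1 = length xs + length (rev ys)"
      using ch_glue[OF h(1)] by blast
    have lz: "last zs = hd zs" using zs h ch_nonempty[OF h(2)] by (simp add: last_rev)
    have x1: "length xs \<ge> 1" "length ys \<ge> 1" "length zs \<ge> 1"
      using ch_nonempty h(1,2) zs(1) by (auto simp: Suc_le_eq)
    show ?thesis
    proof (cases "2 \<le> length zs")
      case True
      then have "even (length zs - 1)" using noloop zs(1) lz by simp
      then show ?thesis using zs(4)[unfolded length_rev] x1 True by presburger
    next
      case False
      then show ?thesis using zs(4)[unfolded length_rev] x1 by presburger
    qed
  qed
  have EG: "\<E> \<subseteq> \<Gamma>" using E by blast
  have reach: "\<exists>xs. ?ch xs \<and> hd xs = a0 \<and> last xs = b" if h: "b \<in> \<E>" for b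
  proof -
    obtain xs where xs: "ch \<omega> N \<rho> \<Gamma> xs" "hd xs = a0" "last xs = b"
      using h E unfolding chain_linked_def is_chain_ch by blast
    have "set xs \<subseteq> \<E>" using ch_in_E[OF xs(1,2)] E by simp
    then show ?thesis using ch_mono[OF xs(1)] xs by blast
  qed
  have conn: "\<exists>zs. ?ch zs \<and> hd zs = b \<and> last zs = c" if h: "b \<in> \<E>" "c \<in> \<E>" for b c
  proof -
    obtain xs where xs: "?ch xs" "hd xs = a0" "last xs = b" using reach h(1) by blast
    obtain ys where ys: "?ch ys" "hd ys = a0" "last ys = c" using reach h(2) by blast
    have "?ch (rev xs)" using ch_rev xs(1) .
    moreover have "last (rev xs) = hd ys" using xs ys ch_nonempty[OF xs(1)] by (simp add: last_rev)
    ultimately obtain zs where "?ch zs" "hd zs = hd (rev xs)" "last zs = last ys"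
      using ch_glue[OF _ ys(1)] by blast
    then show ?thesis using xs ys ch_nonempty[OF xs(1)] by (auto simp: hd_rev)
  qed
  have short: "\<exists>zs. ?ch zs \<and> hd zs = b \<and> last zs = c \<and> length zs \<le> n" if h: "b \<in> \<E>" "c \<in> \<E>" for b c
  proof -
    obtain zs where "?ch zs" "hd zs = b" "last zs = c" using conn h by blast
    then obtain ys where ys: "?ch ys" "hd ys = b" "last ys = c" "distinct ys" using ch_distinct by metis
    have "length ys = card (set ys)" using ys(4) by (simp add: distinct_card)
    also have "\<dots> \<le> card \<Gamma>" using ch_set[OF ys(1)] EG assms(3) by (meson card_mono order_trans)
    finally show ?thesis using ys assms(5) by auto
  qed
  have pathpar: "odd (length xs + length zs - 1) = odd (length ys)"
    if h: "?ch xs" "hd xs = a0" "last xs = b" "?ch ys" "hd ys = a0" "last ys = c"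
       "?ch zs" "hd zs = b" "last zs = c" for xs ys zs b c
  proof -
    obtain ws where ws: "?ch ws" "hd ws = hd xs" "last ws = last zs" "length ws + 1 = length xs + length zs"
      using ch_glue[OF h(1) h(7)] h by metis
    have "odd (length ws) = odd (length ys)" using par[OF ws(1) h(4)] ws h by simp
    then show ?thesis using ws(4) by presburger
  qed
  have linkconc: "linked \<omega> (n * N) (real n * \<rho>) (hd zs) (if odd (length zs) then cnj (last zs) else last zs)"
    if h: "?ch zs" "length zs \<le> n" for zs
  proof -
    obtain k where k: "knorm k \<le> int ((length zs - 1) * N)"
      "cmod (2 * \<i> * complex_of_real pi * complex_of_real (kdot k \<omega>) - (hd zs - (if odd (length zs) then last zs else cnj (last zs)))) \<le> real (length zs - 1) * \<rho>"
      using ch_link[OF h(1)] by blast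
    have l1: "length zs \<ge> 1" using ch_nonempty[OF h(1)] by (cases zs) auto
    have "int ((length zs - 1) * N) \<le> int (n * N)" using h(2) by (simp add: mult_right_mono)
    moreover have "real (length zs - 1) * \<rho> < real n * \<rho>" using h(2) l1 assms(1) by simp
    moreover have cj: "cnj (if odd (length zs) then cnj (last zs) else last zs) = (if odd (length zs) then last zs else cnj (last zs))"
      by simp
    ultimately show ?thesis unfolding linked_def cj using k by (intro exI[of _ k] conjI) linarith+
  qed
  define S1 where "S1 = {b\<in>\<E>. \<exists>xs. ?ch xs \<and> hd xs = a0 \<and> last xs = b \<and> odd (length xs)}"
  define S2 where "S2 = {b\<in>\<E>. \<exists>xs. ?ch xs \<and> hd xs = a0 \<and> last xs = b \<and> even (length xs)}"
  have un: "\<E> = S1 \<union> S2" unfolding S1_def S2_def using reach by blast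
  have dj: "S1 \<inter> S2 = {}"
  proof -
    have False if h: "b \<in> S1" "b \<in> S2" for b
    proof -
      obtain xs where "?ch xs" "hd xs = a0" "last xs = b" "odd (length xs)" using h(1) S1_def by blast
      moreover obtain ys where "?ch ys" "hd ys = a0" "last ys = b" "even (length ys)" using h(2) S2_def by blast
      ultimately show False using par by metis
    qed
    then show ?thesis by blast
  qed
  have c1: "\<not> linked \<omega> N \<rho> b c" if h: "b \<in> S1" "c \<in> S1" for b c
  proof
    assume l: "linked \<omega> N \<rho> b c"
    obtain xs where xs: "?ch xs" "hd xs = a0" "last xs = b" "odd (length xs)" using h(1) S1_def by blast
    obtain ys where ys: "?ch ys" "hd ys = a0" "last ys = c" "odd (length ys)" using h(2) S1_def by blast
    have "?ch [b, c]" using l h un by auto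
    from pathpar[OF xs(1-3) ys(1-3) this] xs(4) ys(4) show False by simp
  qed
  have c2: "\<not> linked \<omega> N \<rho> b c" if h: "b \<in> S2" "c \<in> S2" for b c
  proof
    assume l: "linked \<omega> N \<rho> b c"
    obtain xs where xs: "?ch xs" "hd xs = a0" "last xs = b" "even (length xs)" using h(1) S2_def by blast
    obtain ys where ys: "?ch ys" "hd ys = a0" "last ys = c" "even (length ys)" using h(2) S2_def by blast
    have "?ch [b, c]" using l h un by auto
    from pathpar[OF xs(1-3) ys(1-3) this] xs(4) ys(4) ch_nonempty[OF xs(1)] show False by (cases xs) auto
  qed
  have c3: "linked \<omega> (n * N) (real n * \<rho>) b (cnj c)" if h: "b \<in> S1" "c \<in> S1" for b c
  proof -
    obtain xs where xs: "?ch xs" "hd xs = a0" "last xs = b" "odd (length xs)" using h(1) S1_def by blast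
    obtain ys where ys: "?ch ys" "hd ys = a0" "last ys = c" "odd (length ys)" using h(2) S1_def by blast
    obtain zs where zs: "?ch zs" "hd zs = b" "last zs = c" "length zs \<le> n" using short h un by blast
    have "odd (length zs)" using pathpar[OF xs(1-3) ys(1-3) zs(1-3)] xs(4) ys(4) ch_nonempty[OF xs(1)] by (cases xs) auto
    then show ?thesis using linkconc[OF zs(1,4)] zs by simp
  qed
  have c4: "linked \<omega> (n * N) (real n * \<rho>) b (cnj c)" if h: "b \<in> S2" "c \<in> S2" for b c
  proof -
    obtain xs where xs: "?ch xs" "hd xs = a0" "last xs = b" "even (length xs)" using h(1) S2_def by blast
    obtain ys where ys: "?ch ys" "hd ys = a0" "last ys = c" "even (length ys)" using h(2) S2_def by blast
    obtain zs where zs: "?ch zs" "hd zs = b" "last zs = c" "length zs \<le> n" using short h un by blast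
    have "odd (length zs)" using pathpar[OF xs(1-3) ys(1-3) zs(1-3)] xs(4) ys(4) ch_nonempty[OF xs(1)] by (cases xs) auto
    then show ?thesis using linkconc[OF zs(1,4)] zs by simp
  qed
  have c5: "linked \<omega> (n * N) (real n * \<rho>) b c" if h: "b \<in> S1" "c \<in> S2" for b c
  proof -
    obtain xs where xs: "?ch xs" "hd xs = a0" "last xs = b" "odd (length xs)" using h(1) S1_def by blast
    obtain ys where ys: "?ch ys" "hd ys = a0" "last ys = c" "even (length ys)" using h(2) S2_def by blast
    obtain zs where zs: "?ch zs" "hd zs = b" "last zs = c" "length zs \<le> n" using short h un by blast
    have "even (length zs)" using pathpar[OF xs(1-3) ys(1-3) zs(1-3)] xs(4) ys(4) ch_nonempty[OF xs(1)] ch_nonempty[OF zs(1)]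
      by (cases xs; cases zs) auto
    then show ?thesis using linkconc[OF zs(1,4)] zs by simp
  qed
  show ?thesis
    apply (rule exI[of _ S1], rule exI[of _ S2])
    using un dj c1 c2 c3 c4 c5 by blast
qed

end
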